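(* Let $(X(n),V(n))_{n\ge0}$ be a global solution of the discrete Motsch–Tadmor model (as in the context, under its standing assumptions). Then for all $n\ge0$, \[ \|\Delta^x(n+1)\|_F\le\|\Delta^x(n)\|_F+h\|\Delta^v(n)\|_F,\qquad \|\Delta^v(n+1)\|_F\le\Big[1-h\kappa\big(1-\|\phi\|_{\mathrm{Lip}}N\|\Delta^x(n)\|_F\big)\Big]\|\Delta^v(n)\|_F . \]
   Context: Discrete MT model: fix $N\ge1$, $d\ge1$, $\kappa>0$, $h>0$, and $a:[0,\infty)\to\mathbb{R}$ with constants $0<c_1\le c_2$, $c_1\le a\le c_2$, and $|a(r_1)-a(r_2)|\le L_a|r_1-r_2|$ ($L_a>0$); also $0<h<\min\{1,1/\kappa\}$. A solution satisfies $x_i(n+1)=x_i(n)+hv_i(n)$, $v_i(n+1)=v_i(n)+h\kappa\sum_{j=1}^N\phi_{ij}(n)(v_j(n)-v_i(n))$, $\phi_{ij}(n)=\frac{a(\|x_i(n)-x_j(n)\|)}{\sum_{k}a(\|x_i(n)-x_k(n)\|)}$, with $x_i(n),v_i(n)\in\mathbb{R}^d$. Notation: $\|\Delta^x(n)\|_F=(\sum_{i,j}\|x_i(n)-x_j(n)\|^2)^{1/2}$, $\|\Delta^v(n)\|_F=(\sum_{i,j}\|v_i(n)-v_j(n)\|^2)^{1/2}$, $\|\phi\|_{\mathrm{Lip}}=\frac{L_a}{Nc_1}(1+\frac{c_2}{c_1})$. *)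

theory Defs
  imports "HOL-Analysis.Analysis"
begin

text \<open>Agents are indexed by i < N; states live in real^'d (d = CARD('d) \<ge> 1).
  A trajectory is a map from time steps n to agent configurations.\<close>

definition MT_weight ::
  "nat \<Rightarrow> (real \<Rightarrow> real) \<Rightarrow> (nat \<Rightarrow> real^'d) \<Rightarrow> nat \<Rightarrow> nat \<Rightarrow> real" where
  "MT_weight N a X i j =
     a (norm (X i - X j)) / (\<Sum>k<N. a (norm (X i - X k)))"

definition MT_solution ::
  "nat \<Rightarrow> real \<Rightarrow> real \<Rightarrow> (real \<Rightarrow> real) \<Rightarrow>
   (nat \<Rightarrow> nat \<Rightarrow> real^'d) \<Rightarrow> (nat \<Rightarrow> nat \<Rightarrow> real^'d) \<Rightarrow> bool" where
  "MT_solution N \<kappa> h a x v \<longleftrightarrow>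
     (\<forall>n i. i < N \<longrightarrow>
        x (Suc n) i = x n i + h *\<^sub>R v n i \<and>
        v (Suc n) i = v n i + (h * \<kappa>) *\<^sub>R
           (\<Sum>j<N. MT_weight N a (x n) i j *\<^sub>R (v n j - v n i)))"

definition frob_diff :: "nat \<Rightarrow> (nat \<Rightarrow> real^'d) \<Rightarrow> real" where
  "frob_diff N X = sqrt (\<Sum>i<N. \<Sum>j<N. (norm (X i - X j))\<^sup>2)"

definition phi_Lip :: "nat \<Rightarrow> real \<Rightarrow> real \<Rightarrow> real \<Rightarrow> real" where
  "phi_Lip N La c1 c2 = La / (real N * c1) * (1 + c2 / c1)"

end

theory Submission
  imports Defs
begin

lemma frob_L2: "frob_diff N X = L2_set (\<lambda>(i,j). norm (X i - X j)) ({..<N}\<times>{..<N})"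
  unfolding frob_diff_def L2_set_def
  by (simp add: sum.cartesian_product case_prod_beta)

lemma frob_le:
  assumes "\<And>i j. i < N \<Longrightarrow> j < N \<Longrightarrow> norm (X i - X j) \<le> g i j"
  shows "frob_diff N X \<le> L2_set (\<lambda>(i,j). g i j) ({..<N}\<times>{..<N})"
  unfolding frob_L2 by (rule L2_set_mono) (auto intro: assms)

lemma frob_member:
  assumes "i < N" "j < N"
  shows "norm (X i - X j) \<le> frob_diff N X"
proof -
  have "(\<lambda>(i,j). norm (X i - X j)) (i,j) \<le> L2_set (\<lambda>(i,j). norm (X i - X j)) ({..<N}\<times>{..<N})"
    by (rule member_le_L2_set) (use assms in auto)
  thus ?thesis unfolding frob_L2 by simp
qed

lemma lin_bound:
  assumes "0 \<le> p" "0 \<le> q"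
  shows "L2_set (\<lambda>(i,j). p * f i j + q * g i j) A
     \<le> p * L2_set (\<lambda>(i,j). f i j) A + q * L2_set (\<lambda>(i,j). g i j) A"
proof -
  have "L2_set (\<lambda>(i,j). p * f i j + q * g i j) A
     = L2_set (\<lambda>z. (\<lambda>z. p * (\<lambda>(i,j). f i j) z) z + (\<lambda>z. q * (\<lambda>(i,j). g i j) z) z) A"
    by (rule L2_set_cong) auto
  also have "\<dots> \<le> L2_set (\<lambda>z. p * (\<lambda>(i,j). f i j) z) A + L2_set (\<lambda>z. q * (\<lambda>(i,j). g i j) z) A"
    by (rule L2_set_triangle_ineq)
  also have "\<dots> = p * L2_set (\<lambda>(i,j). f i j) A + q * L2_set (\<lambda>(i,j). g i j) A"
    using assms by (simp add: L2_set_right_distrib)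
  finally show ?thesis .
qed

lemma phi_Lip_nonneg:
  assumes "0 < La" "0 < c1" "c1 \<le> c2"
  shows "0 \<le> phi_Lip N La c1 c2"
proof -
  have "0 \<le> c2 / c1" using assms by simp
  thus ?thesis unfolding phi_Lip_def using assms by simp
qed

lemma weight_sum:
  fixes X :: "nat \<Rightarrow> real^'d"
  assumes N: "N \<ge> 1" and c1: "0 < c1"
    and abnd: "\<And>r. r \<ge> 0 \<Longrightarrow> c1 \<le> a r \<and> a r \<le> c2"
  shows "(\<Sum>j<N. MT_weight N a X i j) = 1"
proof -
  have "(\<Sum>k<N. a (norm (X i - X k))) \<ge> (\<Sum>k<N. c1)"
    by (rule sum_mono) (use abnd in auto)
  moreover have "(\<Sum>k<N. c1) > 0" using N c1 by simp
  ultimately have "(\<Sum>k<N. a (norm (X i - X k))) \<noteq> 0" by linarith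
  thus ?thesis unfolding MT_weight_def by (simp add: sum_divide_distrib[symmetric])
qed

lemma weight_lip:
  fixes X :: "nat \<Rightarrow> real^'d"
  assumes N: "N \<ge> 1" and c1: "0 < c1"
    and abnd: "\<And>r. r \<ge> 0 \<Longrightarrow> c1 \<le> a r \<and> a r \<le> c2"
    and La: "La > 0"
    and alip: "\<And>r1 r2. r1 \<ge> 0 \<Longrightarrow> r2 \<ge> 0 \<Longrightarrow> \<bar>a r1 - a r2\<bar> \<le> La * \<bar>r1 - r2\<bar>"
  shows "\<bar>MT_weight N a X i k - MT_weight N a X j k\<bar> \<le> phi_Lip N La c1 c2 * norm (X i - X j)"
proof -
  define d where "d = norm (X i - X j)"
  define M where "M = real N * c1"
  have M: "M > 0" using N c1 unfolding M_def by simp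
  have d0: "d \<ge> 0" unfolding d_def by simp
  have lipk: "\<bar>a (norm (X i - X l)) - a (norm (X j - X l))\<bar> \<le> La * d" for l
  proof -
    have "\<bar>a (norm (X i - X l)) - a (norm (X j - X l))\<bar> \<le> La * \<bar>norm (X i - X l) - norm (X j - X l)\<bar>"
      by (rule alip) auto
    also have "\<bar>norm (X i - X l) - norm (X j - X l)\<bar> \<le> norm ((X i - X l) - (X j - X l))"
      by (rule norm_triangle_ineq3)
    also have "(X i - X l) - (X j - X l) = X i - X j" by simp
    finally show ?thesis using La unfolding d_def by (simp add: mult_left_mono)
  qed
  define ai where "ai = a (norm (X i - X k))"
  define aj where "aj = a (norm (X j - X k))"
  define Si where "Si = (\<Sum>l<N. a (norm (X i - X l)))"
  define Sj where "Sj = (\<Sum>l<N. a (norm (X j - X l)))"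
  have Si: "Si \<ge> M" unfolding Si_def M_def
    using sum_mono[of "{..<N}" "\<lambda>_. c1" "\<lambda>l. a (norm (X i - X l))"] abnd by auto
  have Sj: "Sj \<ge> M" unfolding Sj_def M_def
    using sum_mono[of "{..<N}" "\<lambda>_. c1" "\<lambda>l. a (norm (X j - X l))"] abnd by auto
  have aj: "0 \<le> aj" "aj \<le> c2" using abnd[of "norm (X j - X k)"] c1 unfolding aj_def by auto
  have aij: "\<bar>ai - aj\<bar> \<le> La * d" unfolding ai_def aj_def by (rule lipk)
  have SS: "\<bar>Sj - Si\<bar> \<le> real N * (La * d)"
  proof -
    have "\<bar>Sj - Si\<bar> = \<bar>\<Sum>l<N. a (norm (X i - X l)) - a (norm (X j - X l))\<bar>"
      unfolding Si_def Sj_def by (simp add: sum_subtractf abs_minus_commute)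
    also have "\<dots> \<le> (\<Sum>l<N. \<bar>a (norm (X i - X l)) - a (norm (X j - X l))\<bar>)"
      by (rule sum_abs)
    also have "\<dots> \<le> (\<Sum>l<N. La * d)" by (rule sum_mono) (rule lipk)
    finally show ?thesis by simp
  qed
  have eq: "ai / Si - aj / Sj = (ai - aj) / Si + aj * (Sj - Si) / (Si * Sj)"
    using Si Sj M by (simp add: field_simps)
  have t1: "\<bar>(ai - aj) / Si\<bar> \<le> La * d / M"
  proof -
    have "\<bar>(ai - aj) / Si\<bar> = \<bar>ai - aj\<bar> / Si" using Si M by simp
    also have "\<dots> \<le> La * d / M" by (rule frac_le) (use aij Si M La d0 in auto)
    finally show ?thesis .
  qed
  have t2: "\<bar>aj * (Sj - Si) / (Si * Sj)\<bar> \<le> c2 * (real N * (La * d)) / (M * M)"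
  proof -
    have "\<bar>aj * (Sj - Si) / (Si * Sj)\<bar> = aj * \<bar>Sj - Si\<bar> / (Si * Sj)"
      using aj Si Sj M by (simp add: abs_mult)
    also have "\<dots> \<le> c2 * (real N * (La * d)) / (M * M)"
    proof (rule frac_le)
      show "0 \<le> c2 * (real N * (La * d))" using aj La d0 by simp
      show "aj * \<bar>Sj - Si\<bar> \<le> c2 * (real N * (La * d))"
        using aj SS by (simp add: mult_mono)
      show "0 < M * M" using M by simp
      show "M * M \<le> Si * Sj" using Si Sj M by (simp add: mult_mono)
    qed
    finally show ?thesis .
  qed
  have "\<bar>ai / Si - aj / Sj\<bar> \<le> La * d / M + c2 * (real N * (La * d)) / (M * M)"
    unfolding eq by (rule order_trans[OF abs_triangle_ineq add_mono[OF t1 t2]])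
  also have "\<dots> = phi_Lip N La c1 c2 * d"
    unfolding phi_Lip_def M_def using c1 N by (simp add: field_simps)
  finally show ?thesis unfolding MT_weight_def ai_def aj_def Si_def Sj_def d_def .
qed

lemma v_step:
  fixes X V :: "nat \<Rightarrow> real^'d"
  assumes N: "N \<ge> 1" and c1: "0 < c1"
    and abnd: "\<And>r. r \<ge> 0 \<Longrightarrow> c1 \<le> a r \<and> a r \<le> c2"
    and La: "La > 0"
    and alip: "\<And>r1 r2. r1 \<ge> 0 \<Longrightarrow> r2 \<ge> 0 \<Longrightarrow> \<bar>a r1 - a r2\<bar> \<le> La * \<bar>r1 - r2\<bar>"
    and hk0: "0 \<le> 1 - t" and t0: "0 \<le> t"
    and W: "\<And>i. i < N \<Longrightarrow> W i = V i + t *\<^sub>R (\<Sum>j<N. MT_weight N a X i j *\<^sub>R (V j - V i))"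
    and ij: "i < N" "j < N"
  shows "norm (W i - W j) \<le> (1 - t) * norm (V i - V j)
           + t * (real N * phi_Lip N La c1 c2 * frob_diff N V * norm (X i - X j))"
proof -
  define \<phi> where "\<phi> = MT_weight N a X"
  define w where "w i = (\<Sum>k<N. \<phi> i k *\<^sub>R V k)" for i
  have s1: "(\<Sum>k<N. \<phi> i k) = 1" for i unfolding \<phi>_def by (rule weight_sum[OF N c1 abnd])
  have Wi: "W i = (1 - t) *\<^sub>R V i + t *\<^sub>R w i" if "i < N" for i
  proof -
    have "(\<Sum>j<N. \<phi> i j *\<^sub>R (V j - V i)) = w i - (\<Sum>j<N. \<phi> i j) *\<^sub>R V i"
      unfolding w_def by (simp add: scaleR_diff_right sum_subtractf scaleR_sum_left)
    also have "\<dots> = w i - V i" using s1[of i] by simp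
    finally have e: "(\<Sum>j<N. \<phi> i j *\<^sub>R (V j - V i)) = w i - V i" .
    have "W i = V i + t *\<^sub>R (w i - V i)" using W[OF that] e unfolding \<phi>_def by simp
    then show ?thesis by (simp add: scaleR_diff_left scaleR_diff_right)
  qed
  have wd: "w i - w j = (\<Sum>k<N. (\<phi> i k - \<phi> j k) *\<^sub>R (V k - V j))"
  proof -
    have "(\<Sum>k<N. (\<phi> i k - \<phi> j k) *\<^sub>R (V k - V j))
        = w i - w j - (\<Sum>k<N. \<phi> i k - \<phi> j k) *\<^sub>R V j"
      unfolding w_def
      by (simp add: scaleR_diff_left scaleR_diff_right sum_subtractf scaleR_sum_left)
    also have "(\<Sum>k<N. \<phi> i k - \<phi> j k) = 0" using s1[of i] s1[of j] by (simp add: sum_subtractf)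
    finally show ?thesis by simp
  qed
  have "norm (w i - w j) \<le> (\<Sum>k<N. norm ((\<phi> i k - \<phi> j k) *\<^sub>R (V k - V j)))"
    unfolding wd by (rule norm_sum)
  also have "\<dots> \<le> (\<Sum>k<N. phi_Lip N La c1 c2 * norm (X i - X j) * frob_diff N V)"
  proof (rule sum_mono)
    fix k assume k: "k \<in> {..<N}"
    have "norm ((\<phi> i k - \<phi> j k) *\<^sub>R (V k - V j)) = \<bar>\<phi> i k - \<phi> j k\<bar> * norm (V k - V j)"
      by simp
    also have "\<dots> \<le> phi_Lip N La c1 c2 * norm (X i - X j) * frob_diff N V"
      apply (rule mult_mono)
      subgoal unfolding \<phi>_def by (rule weight_lip[OF N c1 abnd La alip])
      subgoal using k ij by (intro frob_member) auto
      subgoal using phi_Lip_nonneg[OF La c1, of c2 N] abnd[of 0] by simp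
      subgoal by simp
      done
    finally show "norm ((\<phi> i k - \<phi> j k) *\<^sub>R (V k - V j)) \<le> phi_Lip N La c1 c2 * norm (X i - X j) * frob_diff N V" .
  qed
  also have "\<dots> = real N * phi_Lip N La c1 c2 * frob_diff N V * norm (X i - X j)" by simp
  finally have wb: "norm (w i - w j) \<le> real N * phi_Lip N La c1 c2 * frob_diff N V * norm (X i - X j)" .
  have "W i - W j = (1 - t) *\<^sub>R (V i - V j) + t *\<^sub>R (w i - w j)"
    unfolding Wi[OF ij(1)] Wi[OF ij(2)] by (simp add: scaleR_diff_right)
  hence "norm (W i - W j) \<le> norm ((1 - t) *\<^sub>R (V i - V j)) + norm (t *\<^sub>R (w i - w j))"
    by (metis norm_triangle_ineq)
  also have "\<dots> = (1 - t) * norm (V i - V j) + t * norm (w i - w j)" using hk0 t0 by simp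
  also have "\<dots> \<le> (1 - t) * norm (V i - V j) + t * (real N * phi_Lip N La c1 c2 * frob_diff N V * norm (X i - X j))"
    using wb t0 by (simp add: mult_left_mono)
  finally show ?thesis .
qed

theorem proposition3p3:
  fixes N :: nat and \<kappa> h c1 c2 La :: real and a :: "real \<Rightarrow> real"
    and x v :: "nat \<Rightarrow> nat \<Rightarrow> real^'d"
  assumes N: "N \<ge> 1"
    and kappa: "\<kappa> > 0"
    and hpos: "h > 0" and h1: "h < 1" and hk: "h < 1 / \<kappa>"
    and c1: "0 < c1" and c12: "c1 \<le> c2"
    and abnd: "\<And>r. r \<ge> 0 \<Longrightarrow> c1 \<le> a r \<and> a r \<le> c2"
    and La: "La > 0"
    and alip: "\<And>r1 r2. r1 \<ge> 0 \<Longrightarrow> r2 \<ge> 0 \<Longrightarrow> \<bar>a r1 - a r2\<bar> \<le> La * \<bar>r1 - r2\<bar>"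
    and sol: "MT_solution N \<kappa> h a x v"
  shows "\<forall>n. frob_diff N (x (Suc n)) \<le> frob_diff N (x n) + h * frob_diff N (v n) \<and>
             frob_diff N (v (Suc n)) \<le>
               (1 - h * \<kappa> * (1 - phi_Lip N La c1 c2 * real N * frob_diff N (x n)))
               * frob_diff N (v n)"
proof
  fix n
  let ?A = "{..<N}\<times>{..<N}"
  have hk1: "h * \<kappa> < 1" using hk kappa by (simp add: field_simps)
  have t0: "0 \<le> h * \<kappa>" using hpos kappa by simp
  have xs: "x (Suc n) i = x n i + h *\<^sub>R v n i" if "i < N" for i
    using sol that unfolding MT_solution_def by blast
  have vs: "v (Suc n) i = v n i + (h * \<kappa>) *\<^sub>R (\<Sum>j<N. MT_weight N a (x n) i j *\<^sub>R (v n j - v n i))"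
    if "i < N" for i
    using sol that unfolding MT_solution_def by blast
  have "frob_diff N (x (Suc n)) \<le> L2_set (\<lambda>(i,j). 1 * norm (x n i - x n j) + h * norm (v n i - v n j)) ?A"
  proof (rule frob_le)
    fix i j assume ij: "i < N" "j < N"
    have "x (Suc n) i - x (Suc n) j = (x n i - x n j) + h *\<^sub>R (v n i - v n j)"
      using xs[OF ij(1)] xs[OF ij(2)] by (simp add: algebra_simps)
    hence "norm (x (Suc n) i - x (Suc n) j) \<le> norm (x n i - x n j) + norm (h *\<^sub>R (v n i - v n j))"
      by (metis norm_triangle_ineq)
    thus "norm (x (Suc n) i - x (Suc n) j) \<le> 1 * norm (x n i - x n j) + h * norm (v n i - v n j)"
      using hpos by simp
  qed
  also have "\<dots> \<le> 1 * L2_set (\<lambda>(i,j). norm (x n i - x n j)) ?A + h * L2_set (\<lambda>(i,j). norm (v n i - v n j)) ?A"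
    by (rule lin_bound) (use hpos in auto)
  also have "\<dots> = frob_diff N (x n) + h * frob_diff N (v n)" by (simp add: frob_L2)
  finally have P1: "frob_diff N (x (Suc n)) \<le> frob_diff N (x n) + h * frob_diff N (v n)" .
  define K where "K = real N * phi_Lip N La c1 c2 * frob_diff N (v n)"
  have K0: "0 \<le> K" unfolding K_def using phi_Lip_nonneg[OF La c1 c12, of N] by (simp add: frob_L2)
  have "frob_diff N (v (Suc n)) \<le> L2_set (\<lambda>(i,j). (1 - h * \<kappa>) * norm (v n i - v n j) + (h * \<kappa> * K) * norm (x n i - x n j)) ?A"
  proof (rule frob_le)
    fix i j assume ij: "i < N" "j < N"
    show "norm (v (Suc n) i - v (Suc n) j) \<le> (1 - h * \<kappa>) * norm (v n i - v n j) + (h * \<kappa> * K) * norm (x n i - x n j)"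
      using v_step[OF N c1 abnd La alip _ t0 vs ij] hk1 unfolding K_def by (simp add: mult.assoc)
  qed
  also have "\<dots> \<le> (1 - h * \<kappa>) * L2_set (\<lambda>(i,j). norm (v n i - v n j)) ?A + (h * \<kappa> * K) * L2_set (\<lambda>(i,j). norm (x n i - x n j)) ?A"
    by (rule lin_bound) (use hk1 t0 K0 in auto)
  also have "\<dots> = (1 - h * \<kappa> * (1 - phi_Lip N La c1 c2 * real N * frob_diff N (x n))) * frob_diff N (v n)"
    unfolding K_def by (simp add: frob_L2[symmetric] algebra_simps)
  finally show "frob_diff N (x (Suc n)) \<le> frob_diff N (x n) + h * frob_diff N (v n) \<and>
             frob_diff N (v (Suc n)) \<le>
               (1 - h * \<kappa> * (1 - phi_Lip N La c1 c2 * real N * frob_diff N (x n)))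
               * frob_diff N (v n)" using P1 by simp
qed

end
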